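(* Let $n\geq1$, $p<-n-1$, $\gamma=\frac{p+n+1}{n+1}<0$, and $\psi(r)=\frac{(1+r^2)^{\frac{n+1}{2}}}{r^n}$ for $r>0$. Let $\varphi:[0,\infty)\to[0,\infty)$ be continuous, positive on $(0,\infty)$, with $\lim_{r\to\infty}\varphi(r)=\varphi_\infty\in(0,\infty)$, and decaying to zero rapidly as $r\to0$, in the sense that $M:=\int_0^1\frac{\varphi(r)}{r}\psi(r)^{-\gamma}\,dr<\infty$. Let $\beta>M$ and define $$f(r)=\psi(r)^{\gamma}\Big[\int_1^r\frac{\varphi(s)}{s}\psi(s)^{-\gamma}\,ds+\beta\Big],\qquad r\in(0,\infty).$$ Then $f$ is $C^1$ on $(0,\infty)$, $f(r)>0$ for all $r\in(0,\infty)$, $\lim_{r\to0}f(r)=0$ (so $f$ extends continuously with $f(0)=0$), and $\lim_{r\to\infty}f(r)=\frac{\varphi_\infty}{|\gamma|}$. *)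

theory Defs
  imports "HOL-Analysis.Analysis"
begin

definition psi :: "nat \<Rightarrow> real \<Rightarrow> real" where
  "psi n r = (1 + r\<^sup>2) powr ((real n + 1) / 2) / r ^ n"

end

theory Submission imports Defs "HOL-Real_Asymp.Real_Asymp" begin

lemma psi_pos: "r > 0 \<Longrightarrow> psi n r > 0"
proof -
  assume "r > 0"
  have "1 + r\<^sup>2 > 0" by (simp add: add_pos_nonneg)
  then show ?thesis unfolding psi_def using \<open>r > 0\<close> by simp
qed

lemma psi_powr_exp:
  assumes "r > 0"
  shows "psi n r powr c = exp (c * ((real n + 1) / 2 * ln (1 + r\<^sup>2) - real n * ln r))"
proof -
  have p: "1 + r\<^sup>2 > 0" by (simp add: add_pos_nonneg)
  have "ln (psi n r) = (real n + 1) / 2 * ln (1 + r\<^sup>2) - real n * ln r"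
    unfolding psi_def using assms p
    by (simp add: ln_div ln_powr ln_realpow)
  moreover have "psi n r \<noteq> 0" using psi_pos[of r n] assms by simp
  ultimately show ?thesis by (simp add: powr_def)
qed

lemma L_deriv:
  assumes "r > 0"
  shows "((\<lambda>r. (real n + 1) / 2 * ln (1 + r\<^sup>2) - real n * ln r) has_real_derivative
      ((r\<^sup>2 - real n) / (r * (1 + r\<^sup>2)))) (at r)"
proof -
  have pos: "1 + r * r > 0" by (simp add: add_pos_nonneg)
  have pos2: "1 + r\<^sup>2 > 0" by (simp add: add_pos_nonneg)
  have "((\<lambda>r. (real n + 1) / 2 * ln (1 + r\<^sup>2) - real n * ln r) has_real_derivative
      ((real n + 1) / 2 * ((2 * r) / (1 + r\<^sup>2)) - real n * (1 / r))) (at r)"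
    using assms pos pos2 by (auto intro!: derivative_eq_intros) (simp add: divide_simps; simp add: algebra_simps)
  moreover have "(real n + 1) / 2 * ((2 * r) / (1 + r\<^sup>2)) - real n * (1 / r) = (r\<^sup>2 - real n) / (r * (1 + r\<^sup>2))"
    using assms pos pos2 by (simp add: divide_simps) (simp add: algebra_simps power2_eq_square)
  ultimately show ?thesis by simp
qed

theorem lemma4p1:
  fixes n :: nat and p \<gamma> \<beta> phi_inf M :: real and \<phi> f :: "real \<Rightarrow> real"
  assumes n: "n \<ge> 1"
    and p: "p < - real n - 1"
    and gamma_def: "\<gamma> = (p + real n + 1) / (real n + 1)"
    and phi_cont: "continuous_on {0..} \<phi>"
    and phi_nonneg: "\<And>r. r \<ge> 0 \<Longrightarrow> \<phi> r \<ge> 0"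
    and phi_pos: "\<And>r. r > 0 \<Longrightarrow> \<phi> r > 0"
    and phi_lim: "(\<phi> \<longlongrightarrow> phi_inf) at_top"
    and phi_inf_pos: "phi_inf > 0"
    and M_int: "(\<lambda>r. \<phi> r / r * psi n r powr (- \<gamma>)) integrable_on {0..1}"
    and M_def: "M = integral {0..1} (\<lambda>r. \<phi> r / r * psi n r powr (- \<gamma>))"
    and beta: "\<beta> > M"
    and f_def: "\<And>r. f r = psi n r powr \<gamma> *
        ((LBINT s=1..r. \<phi> s / s * psi n s powr (- \<gamma>)) + \<beta>)"
  shows "(\<exists>f'. (\<forall>r>0. (f has_real_derivative f' r) (at r)) \<and> continuous_on {0<..} f')
    \<and> (\<forall>r>0. f r > 0)
    \<and> (f \<longlongrightarrow> 0) (at_right 0)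
    \<and> (f \<longlongrightarrow> phi_inf / \<bar>\<gamma>\<bar>) at_top"
proof -
  define a where "a = - \<gamma>"
  have gneg: "\<gamma> < 0" unfolding gamma_def using p by (simp add: divide_neg_pos)
  hence apos: "a > 0" unfolding a_def by simp
  have absg: "\<bar>\<gamma>\<bar> = a" using gneg unfolding a_def by simp
  define L where "L = (\<lambda>r::real. (real n + 1) / 2 * ln (1 + r\<^sup>2) - real n * ln r)"
  define L' where "L' = (\<lambda>r::real. (r\<^sup>2 - real n) / (r * (1 + r\<^sup>2)))"
  define g where "g = (\<lambda>s. \<phi> s / s * psi n s powr (- \<gamma>))"
  define G where "G = (\<lambda>r::real. LBINT s=1..r. g s)"
  have sq_ne[simp]: "1 + r\<^sup>2 \<noteq> 0" for r :: real
    by (metis add_pos_nonneg less_numeral_extra(1) zero_le_power2 less_irrefl)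
  have L_der: "r > 0 \<Longrightarrow> (L has_real_derivative L' r) (at r)" for r
    unfolding L_def L'_def by (rule L_deriv)
  have g_eq: "s > 0 \<Longrightarrow> g s = \<phi> s / s * exp (a * L s)" for s
    unfolding g_def L_def a_def by (simp add: psi_powr_exp)
  have f_eq: "r > 0 \<Longrightarrow> f r = exp (\<gamma> * L r) * (G r + \<beta>)" for r
    unfolding f_def G_def L_def g_def by (simp add: psi_powr_exp)
  have phi_cont': "continuous_on {0<..} \<phi>"
    by (rule continuous_on_subset[OF phi_cont]) auto
  have g_cont: "continuous_on {0<..} g"
  proof -
    have "continuous_on {0<..} (\<lambda>s. \<phi> s / s * exp (a * L s))"
      unfolding L_def using phi_cont' by (auto intro!: continuous_intros)
    then show ?thesis by (rule continuous_on_cong[THEN iffD1, rotated 2]) (auto simp: g_eq)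
  qed
  have g_nonneg: "s \<ge> 0 \<Longrightarrow> g s \<ge> 0" for s
    unfolding g_def using phi_nonneg[of s] by simp
  have G_der: "r > 0 \<Longrightarrow> (G has_real_derivative g r) (at r)" for r
  proof -
    assume r: "r > 0"
    define d where "d = min (r/2) 1"
    define e where "e = max (r+1) 2"
    have d: "d > 0" "d \<le> 1" "d < r" using r unfolding d_def by auto
    have e: "1 \<le> e" "r < e" unfolding e_def by auto
    have "continuous_on {d..e} g"
      by (rule continuous_on_subset[OF g_cont]) (use d in auto)
    from interval_integral_FTC2[OF d(2) e(1) this, of r] d e
    have "(G has_vector_derivative g r) (at r within {d..e})"
      unfolding G_def by (simp add: one_ereal_def)
    hence "(G has_vector_derivative g r) (at r within {d<..<e})"
      by (rule has_vector_derivative_within_subset) auto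
    hence "(G has_vector_derivative g r) (at r)"
      using has_vector_derivative_within_open[of r "{d<..<e}"] d e by auto
    thus ?thesis by (simp add: has_real_derivative_iff_has_vector_derivative)
  qed
  have G_cont: "continuous_on {0<..} G"
  proof (rule continuous_at_imp_continuous_on, intro ballI)
    fix x :: real assume "x \<in> {0<..}"
    then have "(G has_real_derivative g x) (at x)" using G_der by simp
    then show "isCont G x" by (rule DERIV_isCont)
  qed
  have M_nonneg: "M \<ge> 0"
    unfolding M_def using M_int g_nonneg unfolding g_def by (intro integral_nonneg) auto
  have G_ge1: "r \<ge> 1 \<Longrightarrow> G r \<ge> 0" for r
  proof -
    assume r: "r \<ge> 1"
    have c: "continuous_on {1..r} g" by (rule continuous_on_subset[OF g_cont]) auto
    have "G r = integral {1..r} g"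
      unfolding G_def using interval_integral_eq_integral[OF r borel_integrable_atLeastAtMost'[OF c]]
      by (simp add: one_ereal_def)
    also have "\<dots> \<ge> 0"
      using integrable_continuous_interval[OF c] g_nonneg by (intro integral_nonneg) auto
    finally show ?thesis .
  qed
  have G_le1: "0 < r \<Longrightarrow> r \<le> 1 \<Longrightarrow> - M \<le> G r \<and> G r \<le> 0" for r
  proof -
    assume r: "0 < r" "r \<le> 1"
    have c: "continuous_on {r..1} g" by (rule continuous_on_subset[OF g_cont]) (use r in auto)
    have "G r = - integral {r..1} g"
      unfolding G_def
      using interval_integral_eq_integral[OF r(2) borel_integrable_atLeastAtMost'[OF c]]
        interval_integral_endpoints_reverse[of 1 r g]
      by (simp add: one_ereal_def)
    moreover have "integral {r..1} g \<ge> 0"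
      using integrable_continuous_interval[OF c] g_nonneg r by (intro integral_nonneg) auto
    moreover have "integral {r..1} g \<le> M"
      unfolding M_def g_def[symmetric]
      using integrable_continuous_interval[OF c] M_int g_nonneg r unfolding g_def
      by (intro integral_subset_le) auto
    ultimately show ?thesis by simp
  qed
  have N_low: "r > 0 \<Longrightarrow> G r + \<beta> \<ge> \<beta> - M" for r
    using G_ge1[of r] G_le1[of r] M_nonneg by (cases "r \<le> 1") auto
  have N_pos: "r > 0 \<Longrightarrow> G r + \<beta> > 0" for r
    using N_low[of r] beta by linarith
  define f' where "f' = (\<lambda>r. exp (\<gamma> * L r) * (\<gamma> * L' r) * (G r + \<beta>) + exp (\<gamma> * L r) * g r)"
  have P1: "(\<forall>r>0. (f has_real_derivative f' r) (at r)) \<and> continuous_on {0<..} f'"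
  proof (intro conjI allI impI)
    fix r :: real assume r: "r > 0"
    have "((\<lambda>r. exp (\<gamma> * L r) * (G r + \<beta>)) has_real_derivative f' r) (at r)"
      unfolding f'_def using L_der[OF r] G_der[OF r]
      by (auto intro!: derivative_eq_intros simp: algebra_simps)
    then show "(f has_real_derivative f' r) (at r)"
      by (rule has_field_derivative_transform_within_open[of _ _ _ "{0<..}"]) (use r f_eq in auto)
  next
    show "continuous_on {0<..} f'"
      unfolding f'_def L_def L'_def using G_cont g_cont
      by (auto intro!: continuous_intros)
  qed
  have P2: "\<forall>r>0. f r > 0"
    using f_eq N_pos by simp
  have P3: "(f \<longlongrightarrow> 0) (at_right 0)"
  proof -
    have ev: "eventually (\<lambda>r. r \<in> {0<..<1}) (at_right (0::real))"
      by (rule eventually_at_right_real) simp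
    have lim1: "((\<lambda>r. exp (a * ln r)) \<longlongrightarrow> 0) (at_right 0)"
      by (rule filterlim_compose[OF exp_at_bot filterlim_tendsto_pos_mult_at_bot[OF tendsto_const apos ln_at_0]])
    have lim2: "((\<lambda>r. \<beta> * exp (a * ln r)) \<longlongrightarrow> 0) (at_right 0)"
      using tendsto_mult[OF tendsto_const lim1, of \<beta>] by simp
    have up: "f r \<le> \<beta> * exp (a * ln r)" if r: "r \<in> {0<..<1}" for r
    proof -
      have r0: "r > 0" "r < 1" using r by auto
      have "ln r < 0" using r0 by simp
      have A: "(real n + 1) / 2 * ln (1 + r\<^sup>2) \<ge> 0" by (intro mult_nonneg_nonneg) auto
      have B: "1 * (- ln r) \<le> real n * (- ln r)"
        using n \<open>ln r < 0\<close> by (intro mult_right_mono) auto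
      have Lr: "L r \<ge> - ln r" unfolding L_def using A B by linarith
      have C: "a * (- ln r) \<le> a * L r" using Lr apos by (intro mult_left_mono) auto
      have D: "\<gamma> * L r = - (a * L r)" by (simp add: a_def)
      have "\<gamma> * L r \<le> a * ln r" using C D by linarith
      hence e1: "exp (\<gamma> * L r) \<le> exp (a * ln r)" by simp
      have "G r + \<beta> \<le> \<beta>" using G_le1[OF r0(1)] r0 by simp
      have "f r = exp (\<gamma> * L r) * (G r + \<beta>)" using f_eq r0 by simp
      also have "\<dots> \<le> exp (a * ln r) * \<beta>"
        using e1 \<open>G r + \<beta> \<le> \<beta>\<close> N_pos[OF r0(1)]
        by (intro mult_mono) auto
      finally show ?thesis by (simp add: mult.commute)
    qed
    show ?thesis
    proof (rule tendsto_sandwich[OF _ _ tendsto_const lim2])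
      show "eventually (\<lambda>r. 0 \<le> f r) (at_right 0)"
        using ev by eventually_elim (use P2 in \<open>auto simp: less_imp_le\<close>)
      show "eventually (\<lambda>r. f r \<le> \<beta> * exp (a * ln r)) (at_right 0)"
        using ev by eventually_elim (rule up)
    qed
  qed
  have P4: "(f \<longlongrightarrow> phi_inf / \<bar>\<gamma>\<bar>) at_top"
  proof -
    have D_top: "LIM r at_top. exp (a * L r) :> at_top"
    proof -
      have "LIM r at_top. a * ln r :> at_top"
        by (rule filterlim_tendsto_pos_mult_at_top[OF tendsto_const apos ln_at_top])
      moreover have "eventually (\<lambda>r. a * ln r \<le> a * L r) at_top"
        using eventually_ge_at_top[of 1]
      proof eventually_elim
        case (elim r)
        have "r\<^sup>2 > 0" using elim by simp
        hence "ln (r\<^sup>2) \<le> ln (1 + r\<^sup>2)" by (subst ln_le_cancel_iff) (auto simp: add_pos_nonneg)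
        moreover have "ln (r\<^sup>2) = 2 * ln r" using elim by (simp add: ln_realpow)
        ultimately have "(real n + 1) / 2 * (2 * ln r) \<le> (real n + 1) / 2 * ln (1 + r\<^sup>2)"
          by (intro mult_left_mono) auto
        hence "ln r \<le> L r" unfolding L_def by (simp add: algebra_simps)
        thus ?case using apos by simp
      qed
      ultimately have "LIM r at_top. a * L r :> at_top" by (rule filterlim_at_top_mono)
      thus ?thesis by (rule filterlim_compose[OF exp_at_top])
    qed
    have ratio: "((\<lambda>r. g r / (exp (a * L r) * (a * L' r))) \<longlongrightarrow> phi_inf / a) at_top"
    proof -
      have q: "((\<lambda>r::real. (1 + r\<^sup>2) / (r\<^sup>2 - real n)) \<longlongrightarrow> 1) at_top"
        by real_asymp
      have "((\<lambda>r. \<phi> r * ((1 + r\<^sup>2) / (r\<^sup>2 - real n)) / a) \<longlongrightarrow> phi_inf * 1 / a) at_top"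
        by (intro tendsto_intros phi_lim q) (use apos in simp)
      moreover have "eventually (\<lambda>r. \<phi> r * ((1 + r\<^sup>2) / (r\<^sup>2 - real n)) / a = g r / (exp (a * L r) * (a * L' r))) at_top"
        using eventually_gt_at_top[of "real n + 1"]
      proof eventually_elim
        case (elim r)
        have r0: "r > 0" using elim by simp
        have rr: "r * r > r * 1" using elim r0 by (intro mult_strict_left_mono) auto
        have rn: "r\<^sup>2 - real n > 0" using elim rr unfolding power2_eq_square by linarith
        define E where "E = exp (a * L r)"
        have E: "E > 0" unfolding E_def by simp
        have p2: "1 + r\<^sup>2 > 0" by (simp add: add_pos_nonneg)
        have "g r / (exp (a * L r) * (a * L' r)) = \<phi> r / r * E / (E * (a * ((r\<^sup>2 - real n) / (r * (1 + r\<^sup>2)))))"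
          unfolding g_eq[OF r0] L'_def E_def by simp
        also have "\<dots> = \<phi> r / r / (a * ((r\<^sup>2 - real n) / (r * (1 + r\<^sup>2))))"
          using E by simp
        also have "\<dots> = \<phi> r * ((1 + r\<^sup>2) / (r\<^sup>2 - real n)) / a"
          using r0 rn apos p2 by (simp add: field_simps)
        finally show ?case by simp
      qed
      ultimately show ?thesis by (simp add: tendsto_cong)
    qed
    have "((\<lambda>r. (G r + \<beta>) / exp (a * L r)) \<longlongrightarrow> phi_inf / a) at_top"
    proof (rule lhospital_at_top_at_top[OF D_top _ _ _ ratio])
      show "eventually (\<lambda>r. exp (a * L r) * (a * L' r) \<noteq> 0) at_top"
        using eventually_gt_at_top[of "real n + 1"]
      proof eventually_elim
        case (elim r)
        have r0: "r > 0" using elim by simp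
        have rr: "r * r > r * 1" using elim r0 by (intro mult_strict_left_mono) auto
        have rn: "r\<^sup>2 - real n > 0" using elim rr unfolding power2_eq_square by linarith
        show ?case using apos rn r0 unfolding L'_def by simp
      qed
      show "eventually (\<lambda>r. ((\<lambda>r. G r + \<beta>) has_real_derivative g r) (at r)) at_top"
        using eventually_gt_at_top[of 0]
        by eventually_elim (auto intro!: derivative_eq_intros G_der)
      show "eventually (\<lambda>r. ((\<lambda>r. exp (a * L r)) has_real_derivative exp (a * L r) * (a * L' r)) (at r)) at_top"
        using eventually_gt_at_top[of 0]
        by eventually_elim (auto intro!: derivative_eq_intros L_der)
    qed
    moreover have "eventually (\<lambda>r. (G r + \<beta>) / exp (a * L r) = f r) at_top"
      using eventually_gt_at_top[of 0]
    proof eventually_elim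
      case (elim r)
      have "exp (\<gamma> * L r) * exp (a * L r) = exp (\<gamma> * L r + a * L r)" by (simp add: exp_add)
      also have "\<gamma> * L r + a * L r = 0" by (simp add: a_def)
      finally have "exp (\<gamma> * L r) * exp (a * L r) = 1" by simp
      hence "exp (\<gamma> * L r) = 1 / exp (a * L r)" by (simp add: field_simps)
      thus ?case using f_eq[of r] elim by simp
    qed
    ultimately show ?thesis using absg by (simp add: tendsto_cong)
  qed
  show ?thesis using P1 P2 P3 P4 by blast
qed

end
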